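(* Let $\mathbf T$ be a countable homogeneous tournament and $\mathbf T^*$ an expansion of $\mathbf T$ as in the context. If $\mathrm{Age}(\mathbf T^* )$ has the expansion property relative to $\mathrm{Age}(\mathbf T)$, then for every positive integer $n$, $\mathrm{Age}(\mathbf T[I_n]^* )$ has the expansion property relative to $\mathrm{Age}(\mathbf T[I_n])$, where $\mathbf T[I_n]$ denotes the reduct of $\mathbf T[I_n]^*$ to the language $\{E\}$.
   Context: The age $\mathrm{Age}(\mathbf F)$ of a structure $\mathbf F$ is the class of finite structures embeddable in $\mathbf F$. Expansion property: let $L\subseteq L^*$ be relational languages, $\mathcal K$ a class of finite $L$-structures and $\mathcal K^*$ a class of finite $L^*$-structures whose $L$-reducts lie in $\mathcal K$. $\mathcal K^*$ has the expansion property relative to $\mathcal K$ if for every $\mathbf A\in\mathcal K$ there is $\mathbf B\in\mathcal K$ such that for all $\mathbf A^*,\mathbf B^*\in\mathcal K^*$ whose $L$-reducts are $\mathbf A$ and $\mathbf B$ respectively, $\mathbf A^*$ embeds into $\mathbf B^*$. A tournament is a directed graph in which every pair of distinct vertices carries exactly one directed edge; it is homogeneous if every isomorphism between finite substructures extends to an automorphism. $\mathbf T=(T,E^{\mathbf T})$ is a countable homogeneous tournament, and $\mathbf T^*$ is an expansion of $\mathbf T$ to a countable relational language $L_{\mathbf T^*}\supseteq\{E,<\}$ in which $<$ is interpreted as a linear order $<^*$ on $T$. For a positive integer $n$, $[n]=\{0,\dots,n-1\}$. The structure $\mathbf T[I_n]^*$ has universe $T\times[n]$ and language $L_{\mathbf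 T^*}\cup\{L_0,\dots,L_{n-1}\}$ ($L_i$ new unary symbols), interpreted as follows: $E((x,i),(y,j))$ iff $E^{\mathbf T}(x,y)$; for each $m$-ary $R\in L_{\mathbf T^*}\setminus\{E,<\}$, $R((x_1,i_1),\dots,(x_m,i_m))$ iff $R^{\mathbf T^*}(x_1,\dots,x_m)$; $(x,i)<(y,j)$ iff $x<^*y$, or $x=y$ and $i<j$; and $L_i(x,j)$ iff $j=i$. *)

theory Defs
  imports Main "HOL-Library.Countable_Set"
begin

type_synonym ('a, 's) rstruct = "'a set \<times> ('s \<Rightarrow> 'a list \<Rightarrow> bool)"

definition is_struct :: "'s set \<Rightarrow> ('s \<Rightarrow> nat) \<Rightarrow> ('a, 's) rstruct \<Rightarrow> bool" where
  "is_struct L ar M \<longleftrightarrow>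
     (\<forall>s xs. snd M s xs \<longrightarrow> s \<in> L \<and> length xs = ar s \<and> set xs \<subseteq> fst M)"

definition preserves ::
  "'s set \<Rightarrow> ('s \<Rightarrow> nat) \<Rightarrow> ('a \<Rightarrow> 'b) \<Rightarrow> 'a set \<Rightarrow> ('a, 's) rstruct \<Rightarrow> ('b, 's) rstruct \<Rightarrow> bool" where
  "preserves L ar f A M N \<longleftrightarrow>
     (\<forall>s\<in>L. \<forall>xs. length xs = ar s \<and> set xs \<subseteq> A \<longrightarrow> (snd M s xs \<longleftrightarrow> snd N s (map f xs)))"

definition is_embedding ::
  "'s set \<Rightarrow> ('s \<Rightarrow> nat) \<Rightarrow> ('a \<Rightarrow> 'b) \<Rightarrow> ('a, 's) rstruct \<Rightarrow> ('b, 's) rstruct \<Rightarrow> bool" where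
  "is_embedding L ar f M N \<longleftrightarrow>
     inj_on f (fst M) \<and> f ` fst M \<subseteq> fst N \<and> preserves L ar f (fst M) M N"

definition embeds :: "'s set \<Rightarrow> ('s \<Rightarrow> nat) \<Rightarrow> ('a, 's) rstruct \<Rightarrow> ('b, 's) rstruct \<Rightarrow> bool" where
  "embeds L ar M N \<longleftrightarrow> (\<exists>f. is_embedding L ar f M N)"

text \<open>The age: all finite L-structures embeddable in F (represented, up to
  isomorphism, by structures whose carrier is a finite set of naturals).\<close>
definition age :: "'s set \<Rightarrow> ('s \<Rightarrow> nat) \<Rightarrow> ('a, 's) rstruct \<Rightarrow> (nat, 's) rstruct set" where
  "age L ar F = {A. finite (fst A) \<and> is_struct L ar A \<and> embeds L ar A F}"

definition reduct :: "'s set \<Rightarrow> ('a, 's) rstruct \<Rightarrow> ('a, 's) rstruct" where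
  "reduct L M = (fst M, \<lambda>s xs. s \<in> L \<and> snd M s xs)"

definition expansion_property ::
  "'s set \<Rightarrow> 's set \<Rightarrow> ('s \<Rightarrow> nat) \<Rightarrow> ('a, 's) rstruct set \<Rightarrow> ('a, 's) rstruct set \<Rightarrow> bool" where
  "expansion_property L Ls ar K Ks \<longleftrightarrow>
     (\<forall>A\<in>K. \<exists>B\<in>K. \<forall>As\<in>Ks. \<forall>Bs\<in>Ks.
        reduct L As = A \<longrightarrow> reduct L Bs = B \<longrightarrow> embeds Ls ar As Bs)"

definition homogeneous :: "'s set \<Rightarrow> ('s \<Rightarrow> nat) \<Rightarrow> ('a, 's) rstruct \<Rightarrow> bool" where
  "homogeneous L ar F \<longleftrightarrow>
     (\<forall>A f. A \<subseteq> fst F \<and> finite A \<and> inj_on f A \<and> f ` A \<subseteq> fst F \<and> preserves L ar f A F F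
        \<longrightarrow> (\<exists>g. bij_betw g (fst F) (fst F) \<and> preserves L ar g (fst F) F F
                 \<and> (\<forall>x\<in>A. g x = f x)))"

definition is_tournament :: "'s \<Rightarrow> ('a, 's) rstruct \<Rightarrow> bool" where
  "is_tournament E F \<longleftrightarrow>
     (\<forall>x\<in>fst F. \<forall>y\<in>fst F.
        (snd F E [x, y] \<longrightarrow> x \<noteq> y) \<and> (x \<noteq> y \<longrightarrow> (snd F E [x, y] \<longleftrightarrow> \<not> snd F E [y, x])))"

definition strict_linear_order_on :: "'a set \<Rightarrow> ('a \<Rightarrow> 'a \<Rightarrow> bool) \<Rightarrow> bool" where
  "strict_linear_order_on C r \<longleftrightarrow>
     (\<forall>x\<in>C. \<not> r x x) \<and>
     (\<forall>x\<in>C. \<forall>y\<in>C. \<forall>z\<in>C. r x y \<and> r y z \<longrightarrow> r x z) \<and>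
     (\<forall>x\<in>C. \<forall>y\<in>C. x \<noteq> y \<longrightarrow> r x y \<or> r y x)"

text \<open>The language of T[I_n]*: old symbols Inl s, new unary symbols L_i = Inr i.\<close>
definition blowup_lang :: "'s set \<Rightarrow> nat \<Rightarrow> ('s + nat) set" where
  "blowup_lang Ls n = Inl ` Ls \<union> Inr ` {..<n}"

definition blowup_ar :: "('s \<Rightarrow> nat) \<Rightarrow> ('s + nat) \<Rightarrow> nat" where
  "blowup_ar ar = case_sum ar (\<lambda>_. 1)"

definition blowup :: "'s \<Rightarrow> nat \<Rightarrow> ('t, 's) rstruct \<Rightarrow> ('t \<times> nat, 's + nat) rstruct" where
  "blowup lt n M =
     (fst M \<times> {..<n},
      \<lambda>s xs. case s of
          Inl r \<Rightarrow> set xs \<subseteq> fst M \<times> {..<n} \<and>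
                   (if r = lt
                    then (\<exists>x i y j. xs = [(x, i), (y, j)] \<and> (snd M lt [x, y] \<or> (x = y \<and> i < j)))
                    else snd M r (map fst xs))
        | Inr i \<Rightarrow> (\<exists>x. x \<in> fst M \<and> i < n \<and> xs = [(x, i)]))"

end

theory Submission
  imports Defs
begin


lemma bl_fst: "fst (blowup lt n M) = fst M \<times> {..<n}"
  by (simp add: blowup_def)

lemma bl_Inl: "snd (blowup lt n M) (Inl r) xs \<longleftrightarrow> set xs \<subseteq> fst M \<times> {..<n} \<and>
   (if r = lt then (\<exists>x i y j. xs = [(x, i), (y, j)] \<and> (snd M lt [x, y] \<or> (x = y \<and> i < j)))
    else snd M r (map fst xs))"
  by (simp add: blowup_def)

lemma bl_Inr: "snd (blowup lt n M) (Inr i) xs \<longleftrightarrow> (\<exists>x. x \<in> fst M \<and> i < n \<and> xs = [(x, i)])"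
  by (simp add: blowup_def)

lemma len2: "length xs = 2 \<Longrightarrow> \<exists>u v. xs = [u, v]"
  by (cases xs; cases "tl xs"; auto)

lemma len1: "length xs = Suc 0 \<Longrightarrow> \<exists>u. xs = [u]"
  by (cases xs; auto)

lemma transfer_bl:
  assumes "s \<in> blowup_lang Ls n" "length xs = blowup_ar ar s" "set xs \<subseteq> X"
    and "\<And>u. u \<in> X \<Longrightarrow> \<alpha> u \<in> fst M \<and> \<beta> u \<in> fst M \<and> l u < n"
    and "\<And>u v. u \<in> X \<Longrightarrow> v \<in> X \<Longrightarrow> \<alpha> u = \<alpha> v \<longleftrightarrow> \<beta> u = \<beta> v"
    and "\<And>r ys. r \<in> Ls \<Longrightarrow> length ys = ar r \<Longrightarrow> set ys \<subseteq> X \<Longrightarrow>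
           snd M r (map \<alpha> ys) \<longleftrightarrow> snd M r (map \<beta> ys)"
    and "ar lt = 2" "lt \<in> Ls"
  shows "snd (blowup lt n M) s (map (\<lambda>u. (\<alpha> u, l u)) xs) \<longleftrightarrow>
         snd (blowup lt n M) s (map (\<lambda>u. (\<beta> u, l u)) xs)"
proof (cases s)
  case (Inl r)
  have r: "r \<in> Ls" using assms(1) Inl by (auto simp: blowup_lang_def)
  have s1: "set (map (\<lambda>u. (\<alpha> u, l u)) xs) \<subseteq> fst M \<times> {..<n}"
       "set (map (\<lambda>u. (\<beta> u, l u)) xs) \<subseteq> fst M \<times> {..<n}"
    using assms(3,4) by auto
  show ?thesis
  proof (cases "r = lt")
    case True
    then have "length xs = 2" using assms(2,7) Inl by (simp add: blowup_ar_def)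
    then obtain u v where xs: "xs = [u, v]" using len2 by blast
    have uv: "u \<in> X" "v \<in> X" using assms(3) xs by auto
    have "snd M lt [\<alpha> u, \<alpha> v] \<longleftrightarrow> snd M lt [\<beta> u, \<beta> v]"
      using assms(6)[of lt "[u,v]"] assms(7,8) uv by auto
    then show ?thesis using Inl True s1 xs assms(5)[OF uv] by (simp add: bl_Inl)
  next
    case False
    have "snd M r (map \<alpha> xs) \<longleftrightarrow> snd M r (map \<beta> xs)"
      using assms(6)[OF r] assms(2,3) Inl by (simp add: blowup_ar_def)
    then show ?thesis using Inl False s1 by (simp add: bl_Inl comp_def)
  qed
next
  case (Inr i)
  then have "length xs = Suc 0" using assms(2) by (simp add: blowup_ar_def)
  then obtain u where xs: "xs = [u]" using len1 by blast
  have "u \<in> X" using assms(3) xs by auto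
  then show ?thesis using Inr xs assms(4) by (auto simp: bl_Inr)
qed

lemma label_surj:
  fixes n :: nat
  assumes "inj_on hb CB" "hb ` CB \<subseteq> X \<times> {..<n}" "\<And>i. i < n \<Longrightarrow> P i \<in> CB"
    and "inj_on P {..<n}" "\<And>i. i < n \<Longrightarrow> fst (hb (P i)) = z" "j < n"
  shows "\<exists>i<n. snd (hb (P i)) = j"
proof -
  define m where "m = (\<lambda>i. snd (hb (P i)))"
  have "inj_on m {..<n}"
  proof (rule inj_onI)
    fix i i' assume ii: "i \<in> {..<n}" "i' \<in> {..<n}" "m i = m i'"
    have "fst (hb (P i)) = fst (hb (P i'))" using assms(5) ii(1,2) by simp
    then have "hb (P i) = hb (P i')" using ii(3) unfolding m_def by (rule prod_eqI)
    then have "P i = P i'" using assms(1) assms(3) ii(1,2) by (meson inj_onD lessThan_iff)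
    then show "i = i'" using assms(4) ii(1,2) by (meson inj_onD)
  qed
  moreover have "m ` {..<n} \<subseteq> {..<n}"
  proof
    fix x assume "x \<in> m ` {..<n}"
    then obtain i where i: "i < n" "x = m i" by blast
    have "hb (P i) \<in> X \<times> {..<n}" using assms(2) assms(3)[OF i(1)] by blast
    then show "x \<in> {..<n}" using i unfolding m_def by (cases "hb (P i)") simp
  qed
  ultimately have "m ` {..<n} = {..<n}" by (intro endo_inj_surj finite_lessThan)
  then have "j \<in> m ` {..<n}" using assms(6) by simp
  then show ?thesis unfolding m_def by blast
qed



lemma noedge:
  assumes "reduct {E} Ts = T" "is_tournament E T" "E \<noteq> lt"
    and "a \<in> fst T \<times> {..<n}" "b \<in> fst T \<times> {..<n}"
  shows "(\<not> snd (blowup lt n Ts) (Inl E) [a, b] \<and> \<not> snd (blowup lt n Ts) (Inl E) [b, a])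
         \<longleftrightarrow> fst a = fst b"
proof -
  have ft: "fst Ts = fst T" using assms(1) by (auto simp: reduct_def)
  have TE: "\<And>x y. snd T E [x,y] = snd Ts E [x,y]" using assms(1)
    by (auto simp: reduct_def)
  obtain x i y j where ab: "a = (x,i)" "b = (y,j)" by (cases a, cases b)
  have xy: "x \<in> fst T" "y \<in> fst T" using assms(4,5) ab by auto
  have "snd (blowup lt n Ts) (Inl E) [a, b] \<longleftrightarrow> snd T E [x, y]"
       "snd (blowup lt n Ts) (Inl E) [b, a] \<longleftrightarrow> snd T E [y, x]"
    using assms(3,4,5) ab ft TE by (auto simp: bl_Inl)
  then show ?thesis using assms(2) xy ab unfolding is_tournament_def by auto
qed



theorem theorem4p3:
  fixes T Ts :: "('t, 's) rstruct" and E lt :: 's and Ls :: "'s set"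
    and ar :: "'s \<Rightarrow> nat" and n :: nat
  assumes "countable (fst T)"
    and "ar E = 2" and "is_struct {E} ar T"
    and "is_tournament E T" and "homogeneous {E} ar T"
    and "countable Ls" and "E \<in> Ls" and "lt \<in> Ls" and "E \<noteq> lt" and "ar lt = 2"
    and "is_struct Ls ar Ts" and "reduct {E} Ts = T"
    and "strict_linear_order_on (fst T) (\<lambda>x y. snd Ts lt [x, y])"
    and "expansion_property {E} Ls ar (age {E} ar T) (age Ls ar Ts)"
    and "n > 0"
  shows "expansion_property {Inl E} (blowup_lang Ls n) (blowup_ar ar)
           (age {Inl E} (blowup_ar ar) (reduct {Inl E} (blowup lt n Ts)))
           (age (blowup_lang Ls n) (blowup_ar ar) (blowup lt n Ts))"
proof -
  define BL where "BL = blowup lt n Ts"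
  define C where "C = fst T \<times> {..<n}"
  have ft: "fst Ts = fst T" using assms(12) by (auto simp: reduct_def)
  have fBL: "fst BL = C" using ft by (simp add: BL_def C_def bl_fst)
  have TE: "\<And>x y. snd T E [x,y] = snd Ts E [x,y]" using assms(12)
    by (auto simp: reduct_def)
  have Tirr: "\<And>x. x \<in> fst T \<Longrightarrow> \<not> snd T E [x,x]" using assms(4) unfolding is_tournament_def by blast
  have Ttot: "\<And>x y. x \<in> fst T \<Longrightarrow> y \<in> fst T \<Longrightarrow> x \<noteq> y \<Longrightarrow> snd T E [x,y] \<or> snd T E [y,x]"
    using assms(4) unfolding is_tournament_def by blast
  have BLE: "\<And>a b. a \<in> C \<Longrightarrow> b \<in> C \<Longrightarrow> snd BL (Inl E) [a,b] \<longleftrightarrow> snd T E [fst a, fst b]"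
    using assms(9) by (simp add: BL_def C_def bl_Inl ft TE)
  have NE: "\<And>a b. a \<in> C \<Longrightarrow> b \<in> C \<Longrightarrow>
      (\<not> snd BL (Inl E) [a, b] \<and> \<not> snd BL (Inl E) [b, a]) \<longleftrightarrow> fst a = fst b"
    unfolding BL_def C_def using noedge[OF assms(12,4,9)] by blast
  have arE: "blowup_ar ar (Inl E) = 2" using assms(2) by (simp add: blowup_ar_def)
  have redBL: "\<And>xs. snd (reduct {Inl E} BL) (Inl E) xs = snd BL (Inl E) xs" "fst (reduct {Inl E} BL) = C"
    using fBL by (auto simp: reduct_def)
  show ?thesis
    unfolding expansion_property_def BL_def[symmetric]
  proof
    fix A assume A: "A \<in> age {Inl E} (blowup_ar ar) (reduct {Inl E} BL)"
    show "\<exists>B\<in>age {Inl E} (blowup_ar ar) (reduct {Inl E} BL).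
            \<forall>As\<in>age (blowup_lang Ls n) (blowup_ar ar) BL.
               \<forall>Bs\<in>age (blowup_lang Ls n) (blowup_ar ar) BL.
                  reduct {Inl E} As = A \<longrightarrow> reduct {Inl E} Bs = B \<longrightarrow>
                  embeds (blowup_lang Ls n) (blowup_ar ar) As Bs"
    proof -
    have Afin: "finite (fst A)" and Astr: "is_struct {Inl E} (blowup_ar ar) A"
      and Aemb: "embeds {Inl E} (blowup_ar ar) A (reduct {Inl E} BL)"
      using A by (auto simp: age_def)
    obtain h where h_inj: "inj_on h (fst A)" and h_img: "h ` fst A \<subseteq> C"
      and h_pres: "preserves {Inl E} (blowup_ar ar) h (fst A) A (reduct {Inl E} BL)"
      using Aemb redBL(2) unfolding embeds_def is_embedding_def by auto
    have hE: "snd A (Inl E) [u,v] \<longleftrightarrow> snd T E [fst (h u), fst (h v)]"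
      if "u \<in> fst A" "v \<in> fst A" for u v
    proof -
      have "snd A (Inl E) [u,v] \<longleftrightarrow> snd (reduct {Inl E} BL) (Inl E) (map h [u,v])"
        using h_pres[unfolded preserves_def, rule_format, of "Inl E" "[u,v]"] arE that by simp
      also have "\<dots> \<longleftrightarrow> snd T E [fst (h u), fst (h v)]"
        using redBL(1) BLE[of "h u" "h v"] h_img that by auto
      finally show ?thesis .
    qed
    define \<rho> where "\<rho> = (\<lambda>u. LEAST v. v \<in> fst A \<and> fst (h v) = fst (h u))"
    have \<rho>1: "\<rho> u \<in> fst A \<and> fst (h (\<rho> u)) = fst (h u)" if "u \<in> fst A" for u
      unfolding \<rho>_def by (rule LeastI[of "\<lambda>v. v \<in> fst A \<and> fst (h v) = fst (h u)" u]) (use that in auto)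
    have \<rho>2: "\<rho> u = \<rho> v \<longleftrightarrow> fst (h u) = fst (h v)" if "u \<in> fst A" "v \<in> fst A" for u v
    proof
      assume "\<rho> u = \<rho> v" then show "fst (h u) = fst (h v)" using \<rho>1 that by metis
    next
      assume "fst (h u) = fst (h v)" then show "\<rho> u = \<rho> v" by (simp add: \<rho>_def)
    qed
    define R where "R = \<rho> ` fst A"
    have RA: "R \<subseteq> fst A" using \<rho>1 by (auto simp: R_def)
    have \<rho>R: "\<rho> u = u" if uR: "u \<in> R" for u
    proof -
      obtain w where w: "w \<in> fst A" "u = \<rho> w" using uR R_def by auto
      then show ?thesis using \<rho>1[OF w(1)] \<rho>2[of "\<rho> w" w] by auto
    qed
    have \<rho>A: "\<rho> u \<in> R" if "u \<in> fst A" for u using that by (simp add: R_def)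
    have Rinj: "u = v" if "u \<in> R" "v \<in> R" "fst (h u) = fst (h v)" for u v
      using \<rho>2[of u v] \<rho>R that RA by auto
    define A0 where "A0 = (R, \<lambda>s xs. s = E \<and> length xs = 2 \<and> set xs \<subseteq> R \<and> snd A (Inl E) xs)"
    have A0age: "A0 \<in> age {E} ar T"
      unfolding age_def
    proof (intro CollectI conjI)
      show "finite (fst A0)" using Afin RA by (auto simp: A0_def intro: finite_subset)
      show "is_struct {E} ar A0" using assms(2) by (auto simp: is_struct_def A0_def)
      show "embeds {E} ar A0 T"
        unfolding embeds_def is_embedding_def
      proof (intro exI[of _ "\<lambda>u. fst (h u)"] conjI)
        show "inj_on (\<lambda>u. fst (h u)) (fst A0)" using Rinj by (auto simp: A0_def inj_on_def)
        show "(\<lambda>u. fst (h u)) ` fst A0 \<subseteq> fst T" using h_img RA by (force simp: A0_def C_def)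
        show "preserves {E} ar (\<lambda>u. fst (h u)) (fst A0) A0 T"
          unfolding preserves_def
        proof (intro ballI allI impI)
          fix s xs assume "s \<in> {E}" and xs: "length xs = ar s \<and> set xs \<subseteq> fst A0"
          then have sE: "s = E" by simp
          obtain u v where uv: "xs = [u,v]" using len2[of xs] xs sE assms(2) by auto
          have "u \<in> fst A" "v \<in> fst A" using xs uv RA by (auto simp: A0_def)
          then show "snd A0 s xs = snd T s (map (\<lambda>u. fst (h u)) xs)"
            using hE sE uv xs by (auto simp: A0_def)
        qed
      qed
    qed
    obtain B0 where B0: "B0 \<in> age {E} ar T" and B0P: "\<forall>As\<in>age Ls ar Ts. \<forall>Bs\<in>age Ls ar Ts.
        reduct {E} As = A0 \<longrightarrow> reduct {E} Bs = B0 \<longrightarrow> embeds Ls ar As Bs"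
      using assms(14) A0age unfolding expansion_property_def by blast
    have B0fin: "finite (fst B0)" and B0str: "is_struct {E} ar B0"
      and B0emb: "embeds {E} ar B0 T" using B0 by (auto simp: age_def)
    obtain g where g_inj: "inj_on g (fst B0)" and g_img: "g ` fst B0 \<subseteq> fst T"
      and g_pres: "preserves {E} ar g (fst B0) B0 T"
      using B0emb unfolding embeds_def is_embedding_def by auto
    have gE: "snd B0 E [c,d] \<longleftrightarrow> snd T E [g c, g d]" if "c \<in> fst B0" "d \<in> fst B0" for c d
      using g_pres[unfolded preserves_def, rule_format, of E "[c,d]"] assms(2) that by simp
    have B0irr: "\<not> snd B0 E [c,c]" if "c \<in> fst B0" for c
      using gE[OF that that] Tirr g_img that by auto
    have B0tot: "snd B0 E [c,d] \<or> snd B0 E [d,c]" if "c \<in> fst B0" "d \<in> fst B0" "c \<noteq> d" for c d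
    proof -
      have "g c \<noteq> g d" using g_inj that unfolding inj_on_def by blast
      then show ?thesis using Ttot[of "g c" "g d"] g_img that gE by auto
    qed
    define CB where "CB = prod_encode ` (fst B0 \<times> {..<n})"
    define B where "B = (CB, \<lambda>(s::'s + nat) xs. s = Inl E \<and> length xs = 2 \<and> set xs \<subseteq> CB \<and>
                                  snd B0 E (map (\<lambda>u. fst (prod_decode u)) xs))"
    have BE: "snd B (Inl E) [prod_encode (c,i), prod_encode (d,j)] \<longleftrightarrow> snd B0 E [c,d]"
      if "c \<in> fst B0" "d \<in> fst B0" "i < n" "j < n" for c i d j
      using that by (simp add: B_def CB_def)
    have CBe: "prod_encode (c,i) \<in> CB" if "c \<in> fst B0" "i < n" for c i
      using that by (simp add: CB_def)
    have Bage: "B \<in> age {Inl E} (blowup_ar ar) (reduct {Inl E} BL)"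
      unfolding age_def
    proof (intro CollectI conjI)
      show "finite (fst B)" using B0fin by (simp add: B_def CB_def)
      show "is_struct {Inl E} (blowup_ar ar) B" using arE by (auto simp: is_struct_def B_def)
      define k where "k = (\<lambda>u. (g (fst (prod_decode u)), snd (prod_decode u)))"
      show "embeds {Inl E} (blowup_ar ar) B (reduct {Inl E} BL)"
        unfolding embeds_def is_embedding_def
      proof (intro exI[of _ k] conjI)
        show "inj_on k (fst B)"
        proof (rule inj_onI)
          fix u v assume "u \<in> fst B" "v \<in> fst B" "k u = k v"
          then obtain c i d j where uv: "u = prod_encode (c,i)" "v = prod_encode (d,j)"
            "c \<in> fst B0" "d \<in> fst B0" "g c = g d" "i = j"
            by (auto simp: B_def CB_def k_def)
          then have "c = d" using g_inj unfolding inj_on_def by blast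
          then show "u = v" using uv by simp
        qed
        show "k ` fst B \<subseteq> fst (reduct {Inl E} BL)"
          using g_img by (auto simp: redBL(2) B_def CB_def k_def C_def)
        show "preserves {Inl E} (blowup_ar ar) k (fst B) B (reduct {Inl E} BL)"
          unfolding preserves_def
        proof (intro ballI allI impI)
          fix s xs assume "s \<in> {Inl E}" and xs: "length xs = blowup_ar ar s \<and> set xs \<subseteq> fst B"
          then have sE: "s = Inl E" by simp
          obtain u v where uv: "xs = [u,v]" using len2[of xs] xs sE arE by auto
          obtain c i d j where cd: "u = prod_encode (c,i)" "v = prod_encode (d,j)"
            "c \<in> fst B0" "d \<in> fst B0" "i < n" "j < n"
            using xs uv by (auto simp: B_def CB_def)
          have "snd B s xs \<longleftrightarrow> snd T E [g c, g d]" using BE cd gE sE uv by simp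
          also have "\<dots> \<longleftrightarrow> snd BL (Inl E) [k u, k v]"
            using BLE[of "k u" "k v"] cd g_img by (auto simp: k_def C_def)
          finally show "snd B s xs = snd (reduct {Inl E} BL) s (map k xs)"
            using redBL(1) sE uv by simp
        qed
      qed
    qed
    show ?thesis
    proof (intro bexI[OF _ Bage] ballI impI)
      fix As Bs assume As: "As \<in> age (blowup_lang Ls n) (blowup_ar ar) BL"
        and Bs: "Bs \<in> age (blowup_lang Ls n) (blowup_ar ar) BL"
        and rA: "reduct {Inl E} As = A" and rB: "reduct {Inl E} Bs = B"
      have fAs: "fst As = fst A" using rA by (auto simp: reduct_def)
      have fBs: "fst Bs = CB" using rB by (auto simp: reduct_def B_def)
      have AsE: "snd As (Inl E) xs = snd A (Inl E) xs" for xs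
        using arg_cong[OF rA, of "\<lambda>M. snd M (Inl E) xs"] by (simp add: reduct_def)
      have BsE: "snd Bs (Inl E) xs = snd B (Inl E) xs" for xs
        using arg_cong[OF rB, of "\<lambda>M. snd M (Inl E) xs"] by (simp add: reduct_def)
      have ELB: "Inl E \<in> blowup_lang Ls n" using assms(7) by (simp add: blowup_lang_def)
      obtain hs where hs_inj: "inj_on hs (fst A)" and hs_img: "hs ` fst A \<subseteq> C"
        and hs_pres: "preserves (blowup_lang Ls n) (blowup_ar ar) hs (fst A) As BL"
        using As fAs fBL unfolding age_def embeds_def is_embedding_def by auto
      obtain hb where hb_inj: "inj_on hb CB" and hb_img: "hb ` CB \<subseteq> C"
        and hb_pres: "preserves (blowup_lang Ls n) (blowup_ar ar) hb CB Bs BL"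
        using Bs fBs fBL unfolding age_def embeds_def is_embedding_def by auto
      have hsE: "snd A (Inl E) [u,v] \<longleftrightarrow> snd BL (Inl E) [hs u, hs v]"
        if "u \<in> fst A" "v \<in> fst A" for u v
        using hs_pres[unfolded preserves_def, rule_format, of "Inl E" "[u,v]"] ELB arE that AsE by simp
      have hbE: "snd B (Inl E) [u,v] \<longleftrightarrow> snd BL (Inl E) [hb u, hb v]"
        if "u \<in> CB" "v \<in> CB" for u v
        using hb_pres[unfolded preserves_def, rule_format, of "Inl E" "[u,v]"] ELB arE that BsE by simp
      have hE2: "snd A (Inl E) [u,v] \<longleftrightarrow> snd BL (Inl E) [h u, h v]"
        if "u \<in> fst A" "v \<in> fst A" for u v
        using hE[OF that] BLE[of "h u" "h v"] h_img that by auto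
      have same: "fst (hs u) = fst (hs v) \<longleftrightarrow> fst (h u) = fst (h v)"
        if "u \<in> fst A" "v \<in> fst A" for u v
      proof -
        have "fst (hs u) = fst (hs v) \<longleftrightarrow> \<not> snd A (Inl E) [u,v] \<and> \<not> snd A (Inl E) [v,u]"
          using NE[of "hs u" "hs v"] hs_img that hsE by auto
        also have "\<dots> \<longleftrightarrow> fst (h u) = fst (h v)"
          using NE[of "h u" "h v"] h_img that hE2 by auto
        finally show ?thesis .
      qed
      define \<psi> where "\<psi> = (\<lambda>u. fst (hs u))"
      have \<psi>T: "\<psi> u \<in> fst T" if "u \<in> fst A" for u using hs_img that by (force simp: \<psi>_def C_def)
      have \<psi>inj: "u = v" if "u \<in> R" "v \<in> R" "\<psi> u = \<psi> v" for u v
        using Rinj[OF that(1,2)] same[of u v] RA that by (auto simp: \<psi>_def)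
      define A0s where "A0s = (R, \<lambda>s xs. s \<in> Ls \<and> length xs = ar s \<and> set xs \<subseteq> R \<and> snd Ts s (map \<psi> xs))"
      have A0sage: "A0s \<in> age Ls ar Ts"
        unfolding age_def
      proof (intro CollectI conjI)
        show "finite (fst A0s)" using Afin RA by (auto simp: A0s_def intro: finite_subset)
        show "is_struct Ls ar A0s" by (auto simp: is_struct_def A0s_def)
        show "embeds Ls ar A0s Ts"
          unfolding embeds_def is_embedding_def preserves_def
          using \<psi>inj \<psi>T RA ft by (intro exI[of _ \<psi>] conjI) (auto simp: A0s_def inj_on_def)
      qed
      have A0sred: "reduct {E} A0s = A0"
        unfolding reduct_def A0s_def A0_def
      proof (simp, intro ext)
        fix s xs
        show "(s = E \<and> s \<in> Ls \<and> length xs = ar s \<and> set xs \<subseteq> R \<and> snd Ts s (map \<psi> xs)) =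
              (s = E \<and> length xs = 2 \<and> set xs \<subseteq> R \<and> snd A (Inl E) xs)"
        proof (cases "s = E \<and> length xs = 2 \<and> set xs \<subseteq> R")
          case True
          then obtain u v where uv: "xs = [u,v]" "u \<in> R" "v \<in> R" using len2[of xs] by auto
          have "snd Ts E [\<psi> u, \<psi> v] \<longleftrightarrow> snd A (Inl E) [u,v]"
            using hsE[of u v] BLE[of "hs u" "hs v"] hs_img uv RA TE by (auto simp: \<psi>_def)
          then show ?thesis using True uv assms(2,7) by auto
        next
          case False then show ?thesis using assms(2) by auto
        qed
      qed
      define \<phi> where "\<phi> = (\<lambda>c. fst (hb (prod_encode (c, 0))))"
      have \<phi>T: "\<phi> c \<in> fst T" if "c \<in> fst B0" for c
        using hb_img CBe[OF that assms(15)] by (force simp: \<phi>_def C_def)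
      have hbfst: "fst (hb (prod_encode (c,i))) = \<phi> c" if "c \<in> fst B0" "i < n" for c i
      proof -
        have "\<not> snd B (Inl E) [prod_encode (c,i), prod_encode (c,0)]"
             "\<not> snd B (Inl E) [prod_encode (c,0), prod_encode (c,i)]"
          using BE B0irr that assms(15) by auto
        moreover have m: "prod_encode (c,i) \<in> CB" "prod_encode (c,0) \<in> CB"
          using CBe that assms(15) by auto
        ultimately show ?thesis
          using NE[of "hb (prod_encode (c,i))" "hb (prod_encode (c,0))"] hbE[OF m] hbE[OF m(2,1)] hb_img m
          by (auto simp: \<phi>_def)
      qed
      have \<phi>inj: "c = d" if "c \<in> fst B0" "d \<in> fst B0" "\<phi> c = \<phi> d" for c d
      proof (rule ccontr)
        assume "c \<noteq> d"
        then have "snd B (Inl E) [prod_encode (c,0), prod_encode (d,0)] \<or>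
                   snd B (Inl E) [prod_encode (d,0), prod_encode (c,0)]"
          using B0tot BE that assms(15) by auto
        moreover have m: "prod_encode (c,0) \<in> CB" "prod_encode (d,0) \<in> CB"
          using CBe that assms(15) by auto
        ultimately show False
          using NE[of "hb (prod_encode (c,0))" "hb (prod_encode (d,0))"] hbE[OF m] hbE[OF m(2,1)] hb_img m that(3)
          by (auto simp: \<phi>_def)
      qed
      define B0s where "B0s = (fst B0, \<lambda>s xs. s \<in> Ls \<and> length xs = ar s \<and> set xs \<subseteq> fst B0 \<and> snd Ts s (map \<phi> xs))"
      have B0sage: "B0s \<in> age Ls ar Ts"
        unfolding age_def
      proof (intro CollectI conjI)
        show "finite (fst B0s)" using B0fin by (auto simp: B0s_def)
        show "is_struct Ls ar B0s" by (auto simp: is_struct_def B0s_def)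
        show "embeds Ls ar B0s Ts"
          unfolding embeds_def is_embedding_def preserves_def
          using \<phi>inj \<phi>T ft by (intro exI[of _ \<phi>] conjI) (auto simp: B0s_def inj_on_def)
      qed
      have B0sred: "reduct {E} B0s = B0"
      proof -
        have "snd B0 = (\<lambda>s xs. s = E \<and> s \<in> Ls \<and> length xs = ar s \<and> set xs \<subseteq> fst B0 \<and> snd Ts s (map \<phi> xs))"
        proof (intro ext)
          fix s xs
          show "snd B0 s xs = (s = E \<and> s \<in> Ls \<and> length xs = ar s \<and> set xs \<subseteq> fst B0 \<and> snd Ts s (map \<phi> xs))"
          proof (cases "s = E \<and> length xs = 2 \<and> set xs \<subseteq> fst B0")
            case True
            then obtain c d where uv: "xs = [c,d]" "c \<in> fst B0" "d \<in> fst B0" using len2[of xs] by auto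
            have "snd Ts E [\<phi> c, \<phi> d] \<longleftrightarrow> snd B0 E [c,d]"
              using hbE[of "prod_encode (c,0)" "prod_encode (d,0)"] BE[of c d 0 0]
                BLE[of "hb (prod_encode (c,0))" "hb (prod_encode (d,0))"] hb_img CBe uv assms(15) TE
              by (auto simp: \<phi>_def)
            then show ?thesis using True uv assms(2,7) by auto
          next
            case False then show ?thesis using assms(2) B0str by (auto simp: is_struct_def)
          qed
        qed
        then show ?thesis unfolding reduct_def B0s_def by (simp add: prod_eq_iff)
      qed
      obtain f where f_inj: "inj_on f R" and f_img: "f ` R \<subseteq> fst B0"
        and f_pres: "preserves Ls ar f R A0s B0s"
      proof -
        have "embeds Ls ar A0s B0s" using B0P A0sage B0sage A0sred B0sred by blast
        moreover have "fst A0s = R" "fst B0s = fst B0" by (simp_all add: A0s_def B0s_def)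
        ultimately show ?thesis using that unfolding embeds_def is_embedding_def by auto
      qed
      have fP: "snd Ts r (map \<psi> ys) \<longleftrightarrow> snd Ts r (map \<phi> (map f ys))"
        if "r \<in> Ls" "length ys = ar r" "set ys \<subseteq> R" for r ys
        using f_pres[unfolded preserves_def, rule_format, of r ys] that f_img
        by (auto simp: A0s_def B0s_def)
      have hbsurj: "\<exists>i<n. snd (hb (prod_encode (c,i))) = j" if "c \<in> fst B0" "j < n" for c j
      proof (rule label_surj[where X="fst T" and z="\<phi> c" and CB=CB])
        show "inj_on hb CB" by (rule hb_inj)
        show "hb ` CB \<subseteq> fst T \<times> {..<n}" using hb_img by (simp add: C_def)
        show "prod_encode (c, i) \<in> CB" if "i < n" for i using CBe \<open>c \<in> fst B0\<close> that by blast
        show "inj_on (\<lambda>i. prod_encode (c, i)) {..<n}" by (auto simp: inj_on_def prod_encode_eq)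
        show "fst (hb (prod_encode (c, i))) = \<phi> c" if "i < n" for i using hbfst \<open>c \<in> fst B0\<close> that by blast
        show "j < n" by (rule that(2))
      qed
      define \<sigma> where "\<sigma> = (\<lambda>c j. SOME i. i < n \<and> snd (hb (prod_encode (c,i))) = j)"
      have \<sigma>: "\<sigma> c j < n \<and> snd (hb (prod_encode (c, \<sigma> c j))) = j" if "c \<in> fst B0" "j < n" for c j
        unfolding \<sigma>_def using someI_ex[OF hbsurj[OF that]] by blast
      define F where "F = (\<lambda>u. prod_encode (f (\<rho> u), \<sigma> (f (\<rho> u)) (snd (hs u))))"
      have hsC: "hs u \<in> C" if "u \<in> fst A" for u using hs_img that by blast
      have hsn: "snd (hs u) < n" if "u \<in> fst A" for u using hsC[OF that] by (simp add: C_def mem_Times_iff)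
      have fr: "f (\<rho> u) \<in> fst B0" if "u \<in> fst A" for u using f_img \<rho>A[OF that] by blast
      have FCB: "F u \<in> CB" if "u \<in> fst A" for u
        using CBe[OF fr[OF that]] \<sigma>[OF fr[OF that] hsn[OF that]] by (simp add: F_def)
      have hbF: "hb (F u) = (\<phi> (f (\<rho> u)), snd (hs u))" if "u \<in> fst A" for u
        using hbfst[OF fr[OF that]] \<sigma>[OF fr[OF that] hsn[OF that]] by (simp add: F_def prod_eq_iff)
      have hsd: "hs u = (\<psi> (\<rho> u), snd (hs u))" if "u \<in> fst A" for u
        using same[of u "\<rho> u"] \<rho>1[OF that] that by (simp add: \<psi>_def prod_eq_iff)
      have \<alpha>\<beta>: "\<psi> (\<rho> u) = \<psi> (\<rho> v) \<longleftrightarrow> \<phi> (f (\<rho> u)) = \<phi> (f (\<rho> v))"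
        if "u \<in> fst A" "v \<in> fst A" for u v
      proof -
        have "\<psi> (\<rho> u) = \<psi> (\<rho> v) \<longleftrightarrow> \<rho> u = \<rho> v" using \<psi>inj[OF \<rho>A[OF that(1)] \<rho>A[OF that(2)]] by auto
        also have "\<dots> \<longleftrightarrow> f (\<rho> u) = f (\<rho> v)" using inj_onD[OF f_inj _ \<rho>A[OF that(1)] \<rho>A[OF that(2)]] by auto
        also have "\<dots> \<longleftrightarrow> \<phi> (f (\<rho> u)) = \<phi> (f (\<rho> v))" using \<phi>inj[OF fr[OF that(1)] fr[OF that(2)]] by auto
        finally show ?thesis .
      qed
      show "embeds (blowup_lang Ls n) (blowup_ar ar) As Bs"
        unfolding embeds_def is_embedding_def fAs fBs
      proof (intro exI[of _ F] conjI)
        show "inj_on F (fst A)"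
        proof (rule inj_onI)
          fix u v assume uv: "u \<in> fst A" "v \<in> fst A" "F u = F v"
          have e: "(\<phi> (f (\<rho> u)), snd (hs u)) = (\<phi> (f (\<rho> v)), snd (hs v))"
            using hbF[OF uv(1)] hbF[OF uv(2)] uv(3) by metis
          then have "snd (hs u) = snd (hs v)" "\<psi> (\<rho> u) = \<psi> (\<rho> v)"
            using \<alpha>\<beta>[OF uv(1,2)] by auto
          then have "hs u = hs v" using hsd[OF uv(1)] hsd[OF uv(2)] by (metis)
          then show "u = v" using hs_inj uv unfolding inj_on_def by blast
        qed
        show "F ` fst A \<subseteq> CB" using FCB by auto
        show "preserves (blowup_lang Ls n) (blowup_ar ar) F (fst A) As Bs"
          unfolding preserves_def
        proof (intro ballI allI impI)
          fix s xs assume s: "s \<in> blowup_lang Ls n" and xs: "length xs = blowup_ar ar s \<and> set xs \<subseteq> fst A"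
          have "snd As s xs \<longleftrightarrow> snd BL s (map hs xs)"
            using hs_pres[unfolded preserves_def, rule_format, of s xs] s xs by blast
          also have "map hs xs = map (\<lambda>u. ((\<psi> \<circ> \<rho>) u, (snd \<circ> hs) u)) xs"
            using hsd xs by (auto intro!: map_cong)
          also have "snd BL s \<dots> \<longleftrightarrow> snd BL s (map (\<lambda>u. ((\<phi> \<circ> f \<circ> \<rho>) u, (snd \<circ> hs) u)) xs)"
            unfolding BL_def
          proof (rule transfer_bl[where X = "fst A" and \<alpha>="\<psi> \<circ> \<rho>" and \<beta>="\<phi> \<circ> f \<circ> \<rho>" and l="snd \<circ> hs" and M=Ts and lt=lt and n=n and Ls=Ls and ar=ar])
            show "s \<in> blowup_lang Ls n" by (rule s)
            show "length xs = blowup_ar ar s" "set xs \<subseteq> fst A" using xs by auto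
            show "(\<psi> \<circ> \<rho>) u \<in> fst Ts \<and> (\<phi> \<circ> f \<circ> \<rho>) u \<in> fst Ts \<and> (snd \<circ> hs) u < n"
              if "u \<in> fst A" for u
              using \<psi>T[OF \<rho>1[OF that, THEN conjunct1]] \<phi>T[OF fr[OF that]] hsn[OF that] ft by simp
            show "(\<psi> \<circ> \<rho>) u = (\<psi> \<circ> \<rho>) v \<longleftrightarrow> (\<phi> \<circ> f \<circ> \<rho>) u = (\<phi> \<circ> f \<circ> \<rho>) v"
              if "u \<in> fst A" "v \<in> fst A" for u v using \<alpha>\<beta>[OF that] by simp
            show "snd Ts r (map (\<psi> \<circ> \<rho>) ys) \<longleftrightarrow> snd Ts r (map (\<phi> \<circ> f \<circ> \<rho>) ys)"
              if "r \<in> Ls" "length ys = ar r" "set ys \<subseteq> fst A" for r ys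
            proof -
              have "set (map \<rho> ys) \<subseteq> R" using that(3) \<rho>A by auto
              then show ?thesis using fP[of r "map \<rho> ys"] that(1,2) by (simp add: comp_assoc)
            qed
            show "ar lt = 2" "lt \<in> Ls" using assms(10,8) by auto
          qed
          also have "map (\<lambda>u. ((\<phi> \<circ> f \<circ> \<rho>) u, (snd \<circ> hs) u)) xs = map hb (map F xs)"
            using hbF xs by (auto intro!: map_cong)
          also have "snd BL s (map hb (map F xs)) \<longleftrightarrow> snd Bs s (map F xs)"
            using hb_pres[unfolded preserves_def, rule_format, of s "map F xs"] s xs FCB by auto
          finally show "snd As s xs = snd Bs s (map F xs)" .
        qed
      qed
    qed
    qed
  qed
qed

end
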